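(* Let $g:[0,1]^n\rightarrow\mathbb{R}$ be twice continuously differentiable (on an open neighborhood of $[0,1]^n$), and for $\boldsymbol{w}\in[0,1]^n$ let $H(\boldsymbol{w})$ denote the Hessian of $g$ at $\boldsymbol{w}$. Let $$K := \max_{\boldsymbol{w}\in[0,1]^n,\ i\in[n]} \Big|\sum_{j\neq i} H_{ij}(\boldsymbol{w})\Big|.$$ Then for every $i\in[n]$, $$\left|\int_{0}^1 \frac{\partial g}{\partial w_i}(t\mathbf{1})\, dt - \big(g(\mathbf{1}_i) - g(\mathbf{0})\big)\right| \le \frac{K}{2},$$ where $\mathbf{1}\in\mathbb{R}^n$ is the all-ones vector, $\mathbf{0}$ is the zero vector, and $\mathbf{1}_i$ is the $i$-th standard basis vector of $\mathbb{R}^n$.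
   Context: $[n]=\{1,\dots,n\}$. The quantity $\int_0^1 \frac{\partial g}{\partial w_i}(t\mathbf{1})\,dt$ is the (path) integrated-gradients attribution of feature $i$ along the straight line from $\mathbf{0}$ to $\mathbf{1}$, and $g(\mathbf{1}_i)-g(\mathbf{0})$ is the marginal gain of feature $i$ at the empty set for the set function $G(S)=g(\mathbf{1}_S)$, where $\mathbf{1}_S\in\{0,1\}^n$ is the indicator vector of $S\subseteq[n]$. *)

theory Defs
  imports "HOL-Analysis.Analysis"
begin

end

theory Submission
  imports Defs
begin

theorem lemma1:
  fixes g :: "real ^ 'n \<Rightarrow> real"
    and D :: "'n \<Rightarrow> real ^ 'n \<Rightarrow> real"
    and H :: "'n \<Rightarrow> 'n \<Rightarrow> real ^ 'n \<Rightarrow> real"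
    and U :: "(real ^ 'n) set"
    and i :: 'n
  assumes U_open: "open U"
    and U_cube: "cbox 0 1 \<subseteq> U"
    and grad: "\<And>x. x \<in> U \<Longrightarrow> (g has_derivative (\<lambda>h. \<Sum>j\<in>UNIV. D j x * h $ j)) (at x)"
    and hess: "\<And>k x. x \<in> U \<Longrightarrow> (D k has_derivative (\<lambda>h. \<Sum>j\<in>UNIV. H k j x * h $ j)) (at x)"
    and hess_cont: "\<And>k j. continuous_on U (H k j)"
  shows "\<bar>integral {0..1} (\<lambda>t. D i (t *\<^sub>R 1)) - (g (axis i 1) - g 0)\<bar>
           \<le> (SUP p\<in>cbox 0 1 \<times> UNIV. \<bar>\<Sum>j\<in>UNIV - {snd p}. H (snd p) j (fst p)\<bar>) / 2"
proof -
  define K where "K = (SUP p\<in>cbox 0 1 \<times> UNIV. \<bar>\<Sum>j\<in>UNIV - {snd p}. H (snd p) j (fst p)\<bar>)"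
  define e :: "real^'n" where "e = axis i 1"
  have cube_mem: "x \<in> cbox 0 1 \<longleftrightarrow> (\<forall>j. 0 \<le> x $ j \<and> x $ j \<le> 1)" for x :: "real^'n"
    by (simp add: mem_box_cart)
  have "\<forall>k. \<exists>B. \<forall>x\<in>cbox 0 1. \<bar>\<Sum>j\<in>UNIV - {k}. H k j x\<bar> \<le> B"
  proof
    fix k
    have "continuous_on (cbox 0 1) (\<lambda>x. \<Sum>j\<in>UNIV - {k}. H k j x)"
      by (intro continuous_intros continuous_on_subset[OF hess_cont U_cube])
    then have "compact ((\<lambda>x. \<Sum>j\<in>UNIV - {k}. H k j x) ` cbox 0 1)"
      by (intro compact_continuous_image) auto
    then obtain B where "\<forall>y\<in>(\<lambda>x. \<Sum>j\<in>UNIV - {k}. H k j x) ` cbox 0 1. norm y \<le> B"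
      using compact_imp_bounded bounded_iff by metis
    then show "\<exists>B. \<forall>x\<in>cbox 0 1. \<bar>\<Sum>j\<in>UNIV - {k}. H k j x\<bar> \<le> B" by auto
  qed
  then obtain B where B: "\<And>k x. x \<in> cbox 0 1 \<Longrightarrow> \<bar>\<Sum>j\<in>UNIV - {k}. H k j x\<bar> \<le> B k"
    by metis
  have bdd: "bdd_above ((\<lambda>p. \<bar>\<Sum>j\<in>UNIV - {snd p}. H (snd p) j (fst p)\<bar>) ` (cbox 0 1 \<times> UNIV))"
  proof (rule bdd_aboveI2)
    fix p :: "(real^'n) \<times> 'n" assume "p \<in> cbox 0 1 \<times> UNIV"
    then have "\<bar>\<Sum>j\<in>UNIV - {snd p}. H (snd p) j (fst p)\<bar> \<le> B (snd p)" using B by auto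
    also have "\<dots> \<le> (\<Sum>k\<in>UNIV. \<bar>B k\<bar>)"
      using member_le_sum[of "snd p" UNIV "\<lambda>k. \<bar>B k\<bar>"] by auto
    finally show "\<bar>\<Sum>j\<in>UNIV - {snd p}. H (snd p) j (fst p)\<bar> \<le> (\<Sum>k\<in>UNIV. \<bar>B k\<bar>)" .
  qed
  have Kb: "x \<in> cbox 0 1 \<Longrightarrow> \<bar>\<Sum>j\<in>UNIV - {i}. H i j x\<bar> \<le> K" for x
    unfolding K_def using cSUP_upper[OF _ bdd, of "(x, i)"] by auto
  have Dcont: "continuous_on U (D k)" for k
    using hess has_derivative_continuous continuous_at_imp_continuous_on by blast
  have ge: "((\<lambda>t. D i (t *\<^sub>R e)) has_integral (g e - g 0)) {0..1}"
  proof -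
    have "((\<lambda>t. D i (t *\<^sub>R e)) has_integral ((g \<circ> (\<lambda>t. t *\<^sub>R e)) 1 - (g \<circ> (\<lambda>t. t *\<^sub>R e)) 0)) {0..1}"
    proof (rule fundamental_theorem_of_calculus)
      fix t :: real assume t: "t \<in> {0..1}"
      have tU: "t *\<^sub>R e \<in> U" using t U_cube unfolding e_def
        by (auto simp: cube_mem axis_def intro!: subsetD[OF U_cube])
      have "((g \<circ> (\<lambda>t. t *\<^sub>R e)) has_derivative ((\<lambda>h. \<Sum>j\<in>UNIV. D j (t *\<^sub>R e) * h $ j) \<circ> (\<lambda>h. h *\<^sub>R e))) (at t)"
        by (rule diff_chain_at) (auto intro!: derivative_eq_intros grad[OF tU])
      moreover have "((\<lambda>h. \<Sum>j\<in>UNIV. D j (t *\<^sub>R e) * h $ j) \<circ> (\<lambda>h. h *\<^sub>R e)) = (\<lambda>h. h *\<^sub>R D i (t *\<^sub>R e))"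
        by (auto simp: e_def axis_def if_distrib cong: if_cong)
      ultimately show "((g \<circ> (\<lambda>t. t *\<^sub>R e)) has_vector_derivative D i (t *\<^sub>R e)) (at t within {0..1})"
        unfolding has_vector_derivative_def by (auto intro: has_derivative_at_withinI)
    qed auto
    then show ?thesis by simp
  qed
  have phi: "\<bar>D i (t *\<^sub>R 1) - D i (t *\<^sub>R e)\<bar> \<le> t * K" if t: "t \<in> {0..1}" for t :: real
  proof -
    define v :: "real^'n" where "v = t *\<^sub>R 1 - t *\<^sub>R e"
    define p where "p = (\<lambda>s::real. t *\<^sub>R e + s *\<^sub>R v)"
    have vj: "v $ j = (if j = i then 0 else t)" for j
      by (simp add: v_def e_def axis_def)
    have pc: "p s \<in> cbox 0 1" if s: "s \<in> {0..1}" for s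
      unfolding cube_mem p_def using s t
      by (auto simp: vj e_def axis_def mult_le_one)
    have pder: "((D i \<circ> p) has_derivative ((\<lambda>h. \<Sum>j\<in>UNIV. H i j (p s) * h $ j) \<circ> (\<lambda>h. h *\<^sub>R v))) (at s within {0..1})"
      if s: "0 \<le> s" "s \<le> 1" for s
    proof -
      have "p s \<in> U" using pc s U_cube by auto
      then show ?thesis unfolding p_def
        by (intro diff_chain_within has_derivative_at_withinI[OF hess])
          (auto intro!: derivative_eq_intros)
    qed
    obtain \<xi> where xi: "\<xi> \<in> {0<..<1}"
      and eq: "(D i \<circ> p) 1 - (D i \<circ> p) 0 = ((\<lambda>h. \<Sum>j\<in>UNIV. H i j (p \<xi>) * h $ j) \<circ> (\<lambda>h. h *\<^sub>R v)) (1 - 0)"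
      using mvt_simple[of 0 1 "D i \<circ> p" "\<lambda>s. (\<lambda>h. \<Sum>j\<in>UNIV. H i j (p s) * h $ j) \<circ> (\<lambda>h. h *\<^sub>R v)", OF _ pder]
      by auto
    have p1: "p 1 = t *\<^sub>R 1" and p0: "p 0 = t *\<^sub>R e" by (auto simp: p_def v_def)
    have sumeq: "(\<Sum>j\<in>UNIV. H i j (p \<xi>) * v $ j) = t * (\<Sum>j\<in>UNIV - {i}. H i j (p \<xi>))"
    proof -
      have "(\<Sum>j\<in>UNIV. H i j (p \<xi>) * v $ j) = H i i (p \<xi>) * v $ i + (\<Sum>j\<in>UNIV - {i}. H i j (p \<xi>) * v $ j)"
        by (simp add: sum.remove)
      also have "\<dots> = (\<Sum>j\<in>UNIV - {i}. H i j (p \<xi>) * t)"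
        by (auto simp: vj intro!: sum.cong)
      finally show ?thesis by (simp add: sum_distrib_left sum_distrib_right mult.commute)
    qed
    have "D i (t *\<^sub>R 1) - D i (t *\<^sub>R e) = t * (\<Sum>j\<in>UNIV - {i}. H i j (p \<xi>))"
      using eq p1 p0 sumeq by simp
    moreover have "\<bar>\<Sum>j\<in>UNIV - {i}. H i j (p \<xi>)\<bar> \<le> K" using Kb pc xi by auto
    ultimately show ?thesis using t by (simp add: abs_mult mult_left_mono)
  qed
  have int1: "(\<lambda>t. D i (t *\<^sub>R 1)) integrable_on {0..1}"
  proof (rule integrable_continuous_real)
    have "(\<lambda>t::real. t *\<^sub>R (1::real^'n)) ` {0..1} \<subseteq> U"
      using U_cube by (auto simp: cube_mem)
    then show "continuous_on {0..1} (\<lambda>t. D i (t *\<^sub>R 1))"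
      by (intro continuous_on_compose2[OF Dcont[of i]] continuous_intros) auto
  qed
  have int2: "(\<lambda>t. D i (t *\<^sub>R e)) integrable_on {0..1}" using ge by blast
  have lin: "((\<lambda>t. t * K) has_integral K / 2) {0..1}"
  proof -
    have "((\<lambda>t. t * K) has_integral ((\<lambda>t. t^2/2 * K) 1 - (\<lambda>t. t^2/2 * K) 0)) {0..1}"
      by (rule fundamental_theorem_of_calculus)
        (auto simp: has_vector_derivative_def intro!: derivative_eq_intros)
    then show ?thesis by simp
  qed
  have "integral {0..1} (\<lambda>t. D i (t *\<^sub>R 1)) - (g e - g 0)
      = integral {0..1} (\<lambda>t. D i (t *\<^sub>R 1) - D i (t *\<^sub>R e))"
    using integral_diff[OF int1 int2] integral_unique[OF ge] by simp
  also have "\<bar>\<dots>\<bar> \<le> integral {0..1} (\<lambda>t. t * K)"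
    using integral_norm_bound_integral[OF integrable_diff[OF int1 int2] has_integral_integrable[OF lin]] phi
    by auto
  also have "\<dots> = K / 2" using lin by (rule integral_unique)
  finally show ?thesis unfolding K_def e_def by simp
qed

end
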